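(* Let $p(z)=z^n+a_nz^{n-1}+\cdots+a_2z+a_1$ be a complex monic polynomial with $n\geq2$ and $a_1\neq0$, with Frobenius companion matrix $C_p$. Then $$r(C_p)\leq\left\{\frac{1}{4}\left(\frac{\delta+1+\sqrt{(\delta-1)^2+4\delta'}}{2}\right)+\frac{3}{4}\left(\frac{1}{2}\left(\delta_1+\delta+\sqrt{(\delta_1-\delta)^2+4\delta_2}\right)+1\right)^{1/2}\right\}^{1/4}.$$
   Context: $r(\cdot)$ is the spectral radius. The Frobenius companion matrix of $p$ is the $n\times n$ matrix $C_p$ whose first row is $(-a_n,-a_{n-1},\dots,-a_2,-a_1)$, whose entries $(k+1,k)$ equal $1$ for $k=1,\dots,n-1$, and whose other entries are $0$. Define numbers $b_j,c_j,d_j$ ($j=1,\dots,n$) by: the first row of $C_p^2$ is $(b_n,b_{n-1},\dots,b_1)$, the first row of $C_p^3$ is $(c_n,\dots,c_1)$, the first row of $C_p^4$ is $(d_n,\dots,d_1)$ (so $b_j=a_na_j-a_{j-1}$, $c_j=-a_nb_j+a_{n-1}a_j-a_{j-2}$ with $a_0=a_{-1}=0$). Set $\alpha=\sum_{j=1}^n|a_j|^2$, $\beta=\sum_{j=1}^n|b_j|^2$, $\gamma=-\sum_{j=1}^n b_j\overline{a_j}$, $\delta=\frac{1}{2}\left(\alpha+\beta+\sqrt{(\alpha-\beta)^2+4|\gamma|^2}\right)$; $\alpha'=\sum_{j=3}^n|a_j|^2$, $\beta'=\sum_{j=3}^n|b_j|^2$, $\gamma'=-\sum_{j=3}^n\overline{a_j}b_j$,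 $\delta'=\frac12\left(\alpha'+\beta'+\sqrt{(\alpha'-\beta')^2+4|\gamma'|^2}\right)$; $\alpha_1=\sum_{j=1}^n|d_j|^2$, $\beta_1=\sum_{j=1}^n|c_j|^2$, $\gamma_1=\sum_{j=1}^n d_j\overline{c_j}$, $\delta_1=\frac12\left(\alpha_1+\beta_1+\sqrt{(\alpha_1-\beta_1)^2+4|\gamma_1|^2}\right)$; $\gamma_2=\sum_{j=1}^n d_j\overline{b_j}$, $\gamma_3=\sum_{j=1}^n d_j\overline{a_j}$, $\gamma_4=\sum_{j=1}^n c_j\overline{b_j}$, $\gamma_5=\sum_{j=1}^n c_j\overline{a_j}$, and $\delta_2=\frac12\Big(|\gamma_2|^2+|\gamma_3|^2+|\gamma_4|^2+|\gamma_5|^2+\sqrt{\big((|\gamma_2|^2+|\gamma_3|^2)-(|\gamma_4|^2+|\gamma_5|^2)\big)^2+4|\gamma_2\overline{\gamma_4}+\gamma_3\overline{\gamma_5}|^2}\Big)$. *)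

theory Defs
  imports "Jordan_Normal_Form.Spectral_Radius"
begin

text \<open>Coefficients: p(z) = z^n + a n z^(n-1) + ... + a 2 z + a 1, given by a :: nat => complex
  (only a 1, ..., a n are used). Matrices are 0-indexed: row i, column j of the paper
  correspond to index (i-1, j-1).\<close>

definition companion :: "nat \<Rightarrow> (nat \<Rightarrow> complex) \<Rightarrow> complex mat" where
  "companion n a = mat n n (\<lambda>(i, j).
     if i = 0 then - a (n - j)
     else if i = j + 1 then 1 else 0)"

text \<open>First row of C_p^k is (e_n, ..., e_1), so e_j is entry (0, n-j) (0-indexed).\<close>
definition firstrow :: "nat \<Rightarrow> (nat \<Rightarrow> complex) \<Rightarrow> nat \<Rightarrow> nat \<Rightarrow> complex" where
  "firstrow n a k j = (companion n a ^\<^sub>m k) $$ (0, n - j)"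

definition bco :: "nat \<Rightarrow> (nat \<Rightarrow> complex) \<Rightarrow> nat \<Rightarrow> complex" where
  "bco n a = firstrow n a 2"
definition cco :: "nat \<Rightarrow> (nat \<Rightarrow> complex) \<Rightarrow> nat \<Rightarrow> complex" where
  "cco n a = firstrow n a 3"
definition dco :: "nat \<Rightarrow> (nat \<Rightarrow> complex) \<Rightarrow> nat \<Rightarrow> complex" where
  "dco n a = firstrow n a 4"

definition alpha :: "nat \<Rightarrow> (nat \<Rightarrow> complex) \<Rightarrow> real" where
  "alpha n a = (\<Sum>j=1..n. (cmod (a j))\<^sup>2)"
definition beta :: "nat \<Rightarrow> (nat \<Rightarrow> complex) \<Rightarrow> real" where
  "beta n a = (\<Sum>j=1..n. (cmod (bco n a j))\<^sup>2)"
definition gamma :: "nat \<Rightarrow> (nat \<Rightarrow> complex) \<Rightarrow> complex" where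
  "gamma n a = - (\<Sum>j=1..n. bco n a j * cnj (a j))"
definition delta :: "nat \<Rightarrow> (nat \<Rightarrow> complex) \<Rightarrow> real" where
  "delta n a = (alpha n a + beta n a
     + sqrt ((alpha n a - beta n a)\<^sup>2 + 4 * (cmod (gamma n a))\<^sup>2)) / 2"

definition alpha' :: "nat \<Rightarrow> (nat \<Rightarrow> complex) \<Rightarrow> real" where
  "alpha' n a = (\<Sum>j=3..n. (cmod (a j))\<^sup>2)"
definition beta' :: "nat \<Rightarrow> (nat \<Rightarrow> complex) \<Rightarrow> real" where
  "beta' n a = (\<Sum>j=3..n. (cmod (bco n a j))\<^sup>2)"
definition gamma' :: "nat \<Rightarrow> (nat \<Rightarrow> complex) \<Rightarrow> complex" where
  "gamma' n a = - (\<Sum>j=3..n. cnj (a j) * bco n a j)"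
definition delta' :: "nat \<Rightarrow> (nat \<Rightarrow> complex) \<Rightarrow> real" where
  "delta' n a = (alpha' n a + beta' n a
     + sqrt ((alpha' n a - beta' n a)\<^sup>2 + 4 * (cmod (gamma' n a))\<^sup>2)) / 2"

definition alpha1 :: "nat \<Rightarrow> (nat \<Rightarrow> complex) \<Rightarrow> real" where
  "alpha1 n a = (\<Sum>j=1..n. (cmod (dco n a j))\<^sup>2)"
definition beta1 :: "nat \<Rightarrow> (nat \<Rightarrow> complex) \<Rightarrow> real" where
  "beta1 n a = (\<Sum>j=1..n. (cmod (cco n a j))\<^sup>2)"
definition gamma1 :: "nat \<Rightarrow> (nat \<Rightarrow> complex) \<Rightarrow> complex" where
  "gamma1 n a = (\<Sum>j=1..n. dco n a j * cnj (cco n a j))"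
definition delta1 :: "nat \<Rightarrow> (nat \<Rightarrow> complex) \<Rightarrow> real" where
  "delta1 n a = (alpha1 n a + beta1 n a
     + sqrt ((alpha1 n a - beta1 n a)\<^sup>2 + 4 * (cmod (gamma1 n a))\<^sup>2)) / 2"

definition gamma2 :: "nat \<Rightarrow> (nat \<Rightarrow> complex) \<Rightarrow> complex" where
  "gamma2 n a = (\<Sum>j=1..n. dco n a j * cnj (bco n a j))"
definition gamma3 :: "nat \<Rightarrow> (nat \<Rightarrow> complex) \<Rightarrow> complex" where
  "gamma3 n a = (\<Sum>j=1..n. dco n a j * cnj (a j))"
definition gamma4 :: "nat \<Rightarrow> (nat \<Rightarrow> complex) \<Rightarrow> complex" where
  "gamma4 n a = (\<Sum>j=1..n. cco n a j * cnj (bco n a j))"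
definition gamma5 :: "nat \<Rightarrow> (nat \<Rightarrow> complex) \<Rightarrow> complex" where
  "gamma5 n a = (\<Sum>j=1..n. cco n a j * cnj (a j))"

definition delta2 :: "nat \<Rightarrow> (nat \<Rightarrow> complex) \<Rightarrow> real" where
  "delta2 n a =
    (let g2 = (cmod (gamma2 n a))\<^sup>2; g3 = (cmod (gamma3 n a))\<^sup>2;
         g4 = (cmod (gamma4 n a))\<^sup>2; g5 = (cmod (gamma5 n a))\<^sup>2
     in (g2 + g3 + g4 + g5
         + sqrt (((g2 + g3) - (g4 + g5))\<^sup>2
                 + 4 * (cmod (gamma2 n a * cnj (gamma4 n a) + gamma3 n a * cnj (gamma5 n a)))\<^sup>2)) / 2)"

end

theory Submission
  imports Defs "HOL-Analysis.L2_Norm"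
begin

definition lam2 :: "real \<Rightarrow> real \<Rightarrow> real \<Rightarrow> real" where
  "lam2 p r q = (p + r + sqrt ((p - r)\<^sup>2 + 4 * q\<^sup>2)) / 2"

lemma lam2_sym: "lam2 p r q = lam2 r p q"
  unfolding lam2_def by (simp add: power2_commute add.commute)

lemma lam2_ge: "lam2 p r q \<ge> p" "lam2 p r q \<ge> r"
proof -
  have "sqrt ((p - r)\<^sup>2) \<le> sqrt ((p - r)\<^sup>2 + 4 * q\<^sup>2)"
    by (intro real_sqrt_le_mono) auto
  hence h: "\<bar>p - r\<bar> \<le> sqrt ((p - r)\<^sup>2 + 4 * q\<^sup>2)" by simp
  have h1: "p - r \<le> sqrt ((p - r)\<^sup>2 + 4 * q\<^sup>2)" using h by (simp add: abs_le_iff)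
  have h2: "r - p \<le> sqrt ((p - r)\<^sup>2 + 4 * q\<^sup>2)" using h by (simp add: abs_le_iff)
  show "lam2 p r q \<ge> p" unfolding lam2_def using h1 by simp
  show "lam2 p r q \<ge> r" unfolding lam2_def using h2 by simp
qed

lemma L1:
  fixes p r q s t :: real
  assumes q: "q \<ge> 0"
  shows "p * s\<^sup>2 + r * t\<^sup>2 + 2 * q * s * t \<le> lam2 p r q * (s\<^sup>2 + t\<^sup>2)"
proof -
  define D where "D = sqrt ((p - r)\<^sup>2 + 4 * q\<^sup>2)"
  define L where "L = lam2 p r q"
  have L: "L = (p + r + D) / 2" unfolding L_def lam2_def D_def by simp
  have D2: "D\<^sup>2 = (p - r)\<^sup>2 + 4 * q\<^sup>2" unfolding D_def by simp
  have Lp: "L - p \<ge> 0" "L - r \<ge> 0" using lam2_ge[where p=p and r=r and q=q] unfolding L_def by auto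
  have "(L - p) * (L - r) = (D\<^sup>2 - (p - r)\<^sup>2) / 4" unfolding L by (simp add: field_simps power2_eq_square)
  hence prod: "(L - p) * (L - r) = q\<^sup>2" using D2 by simp
  define x where "x = sqrt (L - p) * s"
  define y where "y = sqrt (L - r) * t"
  have "x * y = sqrt ((L - p) * (L - r)) * s * t" unfolding x_def y_def by (simp add: real_sqrt_mult)
  also have "\<dots> = q * s * t" using prod q by simp
  finally have xy: "x * y = q * s * t" .
  have x2: "x\<^sup>2 = (L - p) * s\<^sup>2" unfolding x_def using Lp by (simp add: power_mult_distrib)
  have y2: "y\<^sup>2 = (L - r) * t\<^sup>2" unfolding y_def using Lp by (simp add: power_mult_distrib)
  have "0 \<le> (x - y)\<^sup>2" by simp
  hence "2 * (x * y) \<le> x\<^sup>2 + y\<^sup>2" by (simp add: power2_diff)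
  thus ?thesis unfolding L_def[symmetric] using xy x2 y2 by (simp add: algebra_simps)
qed

lemma cmod_add_sq: "(cmod (x + y))\<^sup>2 = (cmod x)\<^sup>2 + (cmod y)\<^sup>2 + 2 * Re (x * cnj y)"
  unfolding cmod_power2 by (simp add: algebra_simps power2_eq_square)

lemma cmod_lin_sq: "(cmod (u0 * x + u1 * y))\<^sup>2 =
   (cmod u0)\<^sup>2 * (cmod x)\<^sup>2 + (cmod u1)\<^sup>2 * (cmod y)\<^sup>2 + 2 * Re (u0 * cnj u1 * (x * cnj y))"
  unfolding cmod_add_sq by (simp add: norm_mult power_mult_distrib mult_ac)

lemma L1c:
  fixes F G :: real and c u0 u1 :: complex
  shows "(cmod u0)\<^sup>2 * F + (cmod u1)\<^sup>2 * G + 2 * Re (u0 * cnj u1 * c)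
     \<le> lam2 F G (cmod c) * ((cmod u0)\<^sup>2 + (cmod u1)\<^sup>2)"
proof -
  have "Re (u0 * cnj u1 * c) \<le> cmod (u0 * cnj u1 * c)" by (rule complex_Re_le_cmod)
  also have "\<dots> = cmod c * cmod u0 * cmod u1" by (simp add: norm_mult)
  finally have "Re (u0 * cnj u1 * c) \<le> cmod c * cmod u0 * cmod u1" .
  moreover have "F * (cmod u0)\<^sup>2 + G * (cmod u1)\<^sup>2 + 2 * cmod c * cmod u0 * cmod u1
     \<le> lam2 F G (cmod c) * ((cmod u0)\<^sup>2 + (cmod u1)\<^sup>2)" by (rule L1) simp
  ultimately show ?thesis by (simp only: mult.commute[of F] mult.commute[of G])
qed

lemma expand_sum:
  "(\<Sum>j\<in>S. (cmod (u0 * f j + u1 * g j))\<^sup>2) =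
   (cmod u0)\<^sup>2 * (\<Sum>j\<in>S. (cmod (f j))\<^sup>2) + (cmod u1)\<^sup>2 * (\<Sum>j\<in>S. (cmod (g j))\<^sup>2)
   + 2 * Re (u0 * cnj u1 * (\<Sum>j\<in>S. f j * cnj (g j)))"
  unfolding cmod_lin_sq sum.distrib sum_distrib_left[symmetric] Re_sum[symmetric]
  by (simp add: sum_distrib_left)

lemma L2:
  "(\<Sum>j\<in>S. (cmod (u0 * f j + u1 * g j))\<^sup>2) \<le>
   lam2 (\<Sum>j\<in>S. (cmod (f j))\<^sup>2) (\<Sum>j\<in>S. (cmod (g j))\<^sup>2) (cmod (\<Sum>j\<in>S. f j * cnj (g j)))
     * ((cmod u0)\<^sup>2 + (cmod u1)\<^sup>2)"
  unfolding expand_sum by (rule L1c)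

lemma CS:
  "cmod (\<Sum>j\<in>S. x j * cnj (y j)) \<le> sqrt (\<Sum>j\<in>S. (cmod (x j))\<^sup>2) * sqrt (\<Sum>j\<in>S. (cmod (y j))\<^sup>2)"
proof -
  have "cmod (\<Sum>j\<in>S. x j * cnj (y j)) \<le> (\<Sum>j\<in>S. cmod (x j * cnj (y j)))" by (rule norm_sum)
  also have "\<dots> = (\<Sum>j\<in>S. \<bar>cmod (x j)\<bar> * \<bar>cmod (y j)\<bar>)" by (simp add: norm_mult)
  also have "\<dots> \<le> L2_set (\<lambda>j. cmod (x j)) S * L2_set (\<lambda>j. cmod (y j)) S" by (rule L2_set_mult_ineq)
  finally show ?thesis unfolding L2_set_def by simp
qed

lemma CS2:
  fixes a b c d :: real
  shows "a * b + c * d \<le> sqrt (a\<^sup>2 + c\<^sup>2) * sqrt (b\<^sup>2 + d\<^sup>2)"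
proof -
  have "(a * b + c * d)\<^sup>2 \<le> (a\<^sup>2 + c\<^sup>2) * (b\<^sup>2 + d\<^sup>2)"
  proof -
    have "(a\<^sup>2 + c\<^sup>2) * (b\<^sup>2 + d\<^sup>2) - (a * b + c * d)\<^sup>2 = (a * d - c * b)\<^sup>2"
      by (simp add: power2_eq_square algebra_simps)
    thus ?thesis by (metis diff_ge_0_iff_ge zero_le_power2)
  qed
  hence "sqrt ((a * b + c * d)\<^sup>2) \<le> sqrt ((a\<^sup>2 + c\<^sup>2) * (b\<^sup>2 + d\<^sup>2))" by (rule real_sqrt_le_mono)
  thus ?thesis by (simp add: real_sqrt_mult)
qed

lemma sq_split:
  fixes x y Y :: real
  assumes "Y > 0"
  shows "(x + y)\<^sup>2 \<le> (Y + 1) * (x\<^sup>2 / Y + y\<^sup>2)"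
proof -
  have "(Y + 1) * (x\<^sup>2 / Y + y\<^sup>2) - (x + y)\<^sup>2 = (x - Y * y)\<^sup>2 / Y"
    using assms by (simp add: field_simps power2_eq_square)
  moreover have "(x - Y * y)\<^sup>2 / Y \<ge> 0" using assms by simp
  ultimately show ?thesis by linarith
qed

lemma cmod_sq_split:
  assumes "Y > 0"
  shows "(cmod (x + y))\<^sup>2 \<le> (Y + 1) * ((cmod x)\<^sup>2 / Y + (cmod y)\<^sup>2)"
proof -
  have "(cmod (x + y))\<^sup>2 \<le> (cmod x + cmod y)\<^sup>2"
    by (simp add: norm_triangle_ineq power_mono)
  also have "\<dots> \<le> (Y + 1) * ((cmod x)\<^sup>2 / Y + (cmod y)\<^sup>2)" by (rule sq_split[OF assms])
  finally show ?thesis .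
qed


lemma companion_carrier: "companion n a \<in> carrier_mat n n"
  unfolding companion_def by auto

lemma companion_idx: "i < n \<Longrightarrow> j < n \<Longrightarrow> companion n a $$ (i,j) =
  (if i = 0 then - a (n - j) else if i = j + 1 then 1 else 0)"
  unfolding companion_def by auto

lemma pow_Suc_left:
  assumes C: "C \<in> carrier_mat n n"
  shows "C ^\<^sub>m Suc k = C * C ^\<^sub>m k"
proof (induction k)
  case 0
  then show ?case using C by simp
next
  case (Suc k)
  have "C ^\<^sub>m Suc (Suc k) = (C * C ^\<^sub>m k) * C" using Suc by simp
  also have "\<dots> = C * (C ^\<^sub>m k * C)" using C by (intro assoc_mult_mat) auto
  finally show ?case by simp
qed

lemma comp_rows:
  assumes i: "i < n" and jc: "jc < n"
  shows "(i \<le> k \<longrightarrow> (companion n a ^\<^sub>m k) $$ (i,jc) = (companion n a ^\<^sub>m (k - i)) $$ (0,jc)) \<and>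
         (k \<le> i \<longrightarrow> (companion n a ^\<^sub>m k) $$ (i,jc) = (if i - k = jc then 1 else 0))"
  using i
proof (induction k arbitrary: i)
  case 0
  then show ?case using jc companion_carrier[of n a] by auto
next
  case (Suc k)
  let ?C = "companion n a"
  have C: "?C \<in> carrier_mat n n" by (rule companion_carrier)
  show ?case
  proof (cases "i = 0")
    case True
    then show ?thesis by simp
  next
    case False
    have "(?C ^\<^sub>m Suc k) $$ (i,jc) = (?C * ?C ^\<^sub>m k) $$ (i,jc)"
      using pow_Suc_left[OF C] by simp
    also have "\<dots> = (\<Sum>m\<in>{0..<n}. ?C $$ (i,m) * (?C ^\<^sub>m k) $$ (m,jc))"
      using C Suc.prems jc by (simp add: scalar_prod_def)
    also have "\<dots> = (\<Sum>m\<in>{0..<n}. if m = i - 1 then (?C ^\<^sub>m k) $$ (m,jc) else 0)"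
      using Suc.prems False by (intro sum.cong) (auto simp: companion_idx)
    also have "\<dots> = (?C ^\<^sub>m k) $$ (i - 1,jc)" using Suc.prems by simp
    finally have e: "(?C ^\<^sub>m Suc k) $$ (i,jc) = (?C ^\<^sub>m k) $$ (i - 1,jc)" .
    have ih: "(i - 1 \<le> k \<longrightarrow> (?C ^\<^sub>m k) $$ (i - 1,jc) = (?C ^\<^sub>m (k - (i - 1))) $$ (0,jc)) \<and>
         (k \<le> i - 1 \<longrightarrow> (?C ^\<^sub>m k) $$ (i - 1,jc) = (if i - 1 - k = jc then 1 else 0))"
      using Suc.IH[of "i - 1"] Suc.prems by auto
    show ?thesis
    proof (intro conjI impI)
      assume "i \<le> Suc k"
      hence "i - 1 \<le> k" "k - (i - 1) = Suc k - i" using False by auto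
      thus "(?C ^\<^sub>m Suc k) $$ (i,jc) = (?C ^\<^sub>m (Suc k - i)) $$ (0,jc)" using e ih by simp
    next
      assume "Suc k \<le> i"
      hence "k \<le> i - 1" "i - 1 - k = i - Suc k" by auto
      thus "(?C ^\<^sub>m Suc k) $$ (i,jc) = (if i - Suc k = jc then 1 else 0)" using e ih by simp
    qed
  qed
qed

lemma sum_split_k:
  fixes g :: "nat \<Rightarrow> 'b::comm_monoid_add"
  shows "(\<Sum>i<n. g i) = (\<Sum>i<k. if i < n then g i else 0) + (\<Sum>c<n - k. g (c + k))"
proof (induction n)
  case 0
  then show ?case by simp
next
  case (Suc n)
  show ?case
  proof (cases "n < k")
    case True
    hence "(\<Sum>i<k. if i < Suc n then g i else 0) = (\<Sum>i<k. if i < n then g i else 0) + g n"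
    proof -
      have "(\<Sum>i<k. if i < Suc n then g i else 0) = (\<Sum>i<k. (if i < n then g i else 0) + (if i = n then g i else 0))"
        by (intro sum.cong) auto
      also have "\<dots> = (\<Sum>i<k. if i < n then g i else 0) + g n" using True by (simp add: sum.distrib)
      finally show ?thesis .
    qed
    then show ?thesis using Suc True by (simp add: add_ac)
  next
    case False
    hence "Suc n - k = Suc (n - k)" by simp
    moreover have "(\<Sum>i<k. if i < Suc n then g i else 0) = (\<Sum>i<k. if i < n then g i else 0)"
      using False by (intro sum.cong) auto
    ultimately show ?thesis using Suc False by (simp add: add_ac)
  qed
qed

lemma sum_reindex_rev:
  fixes h :: "nat \<Rightarrow> 'b::comm_monoid_add"
  shows "(\<Sum>j=Suc k..n. h j) = (\<Sum>c<n - k. h (n - c))"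
  by (rule sum.reindex_bij_witness[of _ "\<lambda>c. n - c" "\<lambda>j. n - j"]) auto

lemma sum_delta_shift:
  fixes m jc :: nat
  shows "(\<Sum>c<m. (if c = jc then 1 else 0) * x c) = (if jc < m then x jc else (0::complex))"
proof -
  have "(\<Sum>c<m. (if c = jc then 1 else 0) * x c) = (\<Sum>c<m. if c = jc then x c else 0)"
    by (intro sum.cong) auto
  also have "\<dots> = (if jc \<in> {..<m} then x jc else 0)" using sum.delta[of "{..<m}" jc x] by simp
  finally show ?thesis by simp
qed


lemma eig_exists:
  assumes n: "n > 0"
  shows "\<exists>l v. cmod l = spectral_radius (companion n a) \<and> (\<exists>i<n. v i \<noteq> 0) \<and>
     (\<forall>k col. col < n \<longrightarrow> (\<Sum>i<n. (companion n a ^\<^sub>m k) $$ (i,col) * v i) = l^k * v col)"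
proof -
  let ?C = "companion n a"
  have C: "?C \<in> carrier_mat n n" by (rule companion_carrier)
  obtain l where l: "l \<in> spectrum ?C" and r: "spectral_radius ?C = cmod l"
    using spectral_radius_mem_max(1)[OF C n] by auto
  have "eigenvalue ?C l" using l unfolding spectrum_def by auto
  hence "poly (char_poly ?C) l = 0" using eigenvalue_root_char_poly[OF C] by auto
  hence "poly (char_poly (transpose_mat ?C)) l = 0" using C by simp
  hence "eigenvalue (transpose_mat ?C) l" using eigenvalue_root_char_poly[of "transpose_mat ?C" n] C by auto
  then obtain w where ev: "eigenvector (transpose_mat ?C) w l" unfolding eigenvalue_def by auto
  have w: "w \<in> carrier_vec n" "w \<noteq> 0\<^sub>v n" and eq: "transpose_mat ?C *\<^sub>v w = l \<cdot>\<^sub>v w"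
    using ev C unfolding eigenvector_def by auto
  define v where "v i = w $ i" for i
  have nz: "\<exists>i<n. v i \<noteq> 0"
  proof (rule ccontr)
    assume "\<not> ?thesis"
    hence "w = 0\<^sub>v n" using w(1) unfolding v_def by (intro eq_vecI) auto
    thus False using w by auto
  qed
  have base: "(\<Sum>i<n. ?C $$ (i,col) * v i) = l * v col" if "col < n" for col
  proof -
    have "(transpose_mat ?C *\<^sub>v w) $ col = (l \<cdot>\<^sub>v w) $ col" using eq by simp
    thus ?thesis using that C w(1) unfolding v_def
      by (auto simp: scalar_prod_def lessThan_atLeast0 mult.commute)
  qed
  have "(\<Sum>i<n. (?C ^\<^sub>m k) $$ (i,col) * v i) = l^k * v col" if "col < n" for k col
    using that
  proof (induction k arbitrary: col)
    case 0
    have "(\<Sum>i<n. (?C ^\<^sub>m 0) $$ (i,col) * v i) = (\<Sum>i<n. (if i = col then v i else 0))"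
      using C 0 by (intro sum.cong) auto
    then show ?case using 0 by simp
  next
    case (Suc k)
    have "(\<Sum>i<n. (?C ^\<^sub>m Suc k) $$ (i,col) * v i)
        = (\<Sum>i<n. (\<Sum>m<n. (?C ^\<^sub>m k) $$ (i,m) * ?C $$ (m,col)) * v i)"
      using Suc.prems C by (auto simp: scalar_prod_def lessThan_atLeast0 intro!: sum.cong)
    also have "\<dots> = (\<Sum>m<n. ?C $$ (m,col) * (\<Sum>i<n. (?C ^\<^sub>m k) $$ (i,m) * v i))"
      unfolding sum_distrib_right sum_distrib_left
      by (subst sum.swap) (simp add: mult_ac)
    also have "\<dots> = (\<Sum>m<n. ?C $$ (m,col) * (l^k * v m))"
      using Suc.IH by simp
    also have "\<dots> = l^k * (\<Sum>m<n. ?C $$ (m,col) * v m)"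
      by (simp add: sum_distrib_left mult_ac)
    also have "\<dots> = l^k * (l * v col)"
      using base[OF Suc.prems] by simp
    finally show ?case by simp
  qed
  thus ?thesis using r nz by auto
qed


lemma sum_restrict_less:
  fixes X :: "nat \<Rightarrow> 'b::comm_monoid_add"
  assumes "m \<le> n"
  shows "(\<Sum>jc<n. if jc < m then X jc else 0) = (\<Sum>jc<m. X jc)"
  by (rule sum.mono_neutral_cong_right) (use assms in auto)

lemma cross_expand:
  fixes u0 u1 u2 u3 :: complex
  shows "(\<Sum>j\<in>S. (u0 * D j + u1 * E j) * cnj (u2 * F j + u3 * G j)) =
    cnj u2 * (u0 * (\<Sum>j\<in>S. D j * cnj (F j)) + u1 * (\<Sum>j\<in>S. E j * cnj (F j)))
  + cnj u3 * (u0 * (\<Sum>j\<in>S. D j * cnj (G j)) + u1 * (\<Sum>j\<in>S. E j * cnj (G j)))"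
proof -
  have "(\<Sum>j\<in>S. (u0 * D j + u1 * E j) * cnj (u2 * F j + u3 * G j)) =
     (\<Sum>j\<in>S. cnj u2 * u0 * (D j * cnj (F j)) + cnj u2 * u1 * (E j * cnj (F j))
            + cnj u3 * u0 * (D j * cnj (G j)) + cnj u3 * u1 * (E j * cnj (G j)))"
    by (intro sum.cong) (auto simp: algebra_simps)
  also have "\<dots> = cnj u2 * u0 * (\<Sum>j\<in>S. D j * cnj (F j)) + cnj u2 * u1 * (\<Sum>j\<in>S. E j * cnj (F j))
     + cnj u3 * u0 * (\<Sum>j\<in>S. D j * cnj (G j)) + cnj u3 * u1 * (\<Sum>j\<in>S. E j * cnj (G j))"
    by (simp add: sum.distrib sum_distrib_left)
  finally show ?thesis by (simp add: algebra_simps)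
qed

theorem mainTheorem12:
  fixes n :: nat and a :: "nat \<Rightarrow> complex"
  assumes "n \<ge> 2" and "a 1 \<noteq> 0"
  shows "spectral_radius (companion n a) \<le>
    ((1/4) * ((delta n a + 1 + sqrt ((delta n a - 1)\<^sup>2 + 4 * delta' n a)) / 2)
     + (3/4) * sqrt ((delta1 n a + delta n a
                      + sqrt ((delta1 n a - delta n a)\<^sup>2 + 4 * delta2 n a)) / 2 + 1))
    powr (1/4)"
proof -
  have n2: "n \<ge> 2" using assms(1) .
  have n0: "n > 0" using n2 by simp
  let ?C = "companion n a"
  have Ccar: "?C \<in> carrier_mat n n" by (rule companion_carrier)
  obtain l v where r: "cmod l = spectral_radius ?C" and nz: "\<exists>i<n. v i \<noteq> 0"
    and ev: "\<And>k jc. jc < n \<Longrightarrow> (\<Sum>i<n. (?C ^\<^sub>m k) $$ (i,jc) * v i) = l^k * v jc"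
    using eig_exists[OF n0, of a] by blast
  define A1 where "A1 jc = - a (n - jc)" for jc
  define B where "B jc = bco n a (n - jc)" for jc
  define Cc where "Cc jc = cco n a (n - jc)" for jc
  define Dd where "Dd jc = dco n a (n - jc)" for jc
  have C1: "?C ^\<^sub>m 1 = ?C" using Ccar by simp
  have F1: "(?C ^\<^sub>m 1) $$ (0,jc) = A1 jc" if "jc < n" for jc
    unfolding C1 using that n0 by (simp add: companion_idx A1_def)
  have F2: "(?C ^\<^sub>m 2) $$ (0,jc) = B jc" if "jc < n" for jc
    using that by (simp add: B_def bco_def firstrow_def)
  have F3: "(?C ^\<^sub>m 3) $$ (0,jc) = Cc jc" if "jc < n" for jc
    using that by (simp add: Cc_def cco_def firstrow_def)
  have F4: "(?C ^\<^sub>m 4) $$ (0,jc) = Dd jc" if "jc < n" for jc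
    using that by (simp add: Dd_def dco_def firstrow_def)

  have alpha_eq: "alpha n a = (\<Sum>c<n. (cmod (A1 c))\<^sup>2)"
    unfolding alpha_def A1_def using sum_reindex_rev[where k=0 and n=n and h="\<lambda>j. (cmod (a j))\<^sup>2"] by simp
  have beta_eq: "beta n a = (\<Sum>c<n. (cmod (B c))\<^sup>2)"
    unfolding beta_def B_def using sum_reindex_rev[where k=0 and n=n and h="\<lambda>j. (cmod (bco n a j))\<^sup>2"] by simp
  have gamma_eq: "gamma n a = (\<Sum>c<n. B c * cnj (A1 c))"
    unfolding gamma_def B_def A1_def using sum_reindex_rev[where k=0 and n=n and h="\<lambda>j. bco n a j * cnj (a j)"]
    by (simp add: sum_negf)
  have alpha'_eq: "alpha' n a = (\<Sum>c<n-2. (cmod (A1 c))\<^sup>2)"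
    unfolding alpha'_def A1_def using sum_reindex_rev[where k=2 and n=n and h="\<lambda>j. (cmod (a j))\<^sup>2"] by (simp add: numeral_3_eq_3)
  have beta'_eq: "beta' n a = (\<Sum>c<n-2. (cmod (B c))\<^sup>2)"
    unfolding beta'_def B_def using sum_reindex_rev[where k=2 and n=n and h="\<lambda>j. (cmod (bco n a j))\<^sup>2"] by (simp add: numeral_3_eq_3)
  have gamma'_eq: "gamma' n a = (\<Sum>c<n-2. B c * cnj (A1 c))"
    unfolding gamma'_def B_def A1_def using sum_reindex_rev[where k=2 and n=n and h="\<lambda>j. cnj (a j) * bco n a j"]
    by (simp add: sum_negf numeral_3_eq_3 mult.commute)
  have alpha1_eq: "alpha1 n a = (\<Sum>c<n. (cmod (Dd c))\<^sup>2)"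
    unfolding alpha1_def Dd_def using sum_reindex_rev[where k=0 and n=n and h="\<lambda>j. (cmod (dco n a j))\<^sup>2"] by simp
  have beta1_eq: "beta1 n a = (\<Sum>c<n. (cmod (Cc c))\<^sup>2)"
    unfolding beta1_def Cc_def using sum_reindex_rev[where k=0 and n=n and h="\<lambda>j. (cmod (cco n a j))\<^sup>2"] by simp
  have gamma1_eq: "gamma1 n a = (\<Sum>c<n. Dd c * cnj (Cc c))"
    unfolding gamma1_def Dd_def Cc_def using sum_reindex_rev[where k=0 and n=n and h="\<lambda>j. dco n a j * cnj (cco n a j)"] by simp
  define h2 where "h2 = (\<Sum>c<n. Dd c * cnj (B c))"
  define h3 where "h3 = (\<Sum>c<n. Dd c * cnj (A1 c))"
  define h4 where "h4 = (\<Sum>c<n. Cc c * cnj (B c))"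
  define h5 where "h5 = (\<Sum>c<n. Cc c * cnj (A1 c))"
  have gamma2_eq: "gamma2 n a = h2"
    unfolding gamma2_def h2_def Dd_def B_def using sum_reindex_rev[where k=0 and n=n and h="\<lambda>j. dco n a j * cnj (bco n a j)"] by simp
  have gamma3_eq: "gamma3 n a = - h3"
    unfolding gamma3_def h3_def Dd_def A1_def using sum_reindex_rev[where k=0 and n=n and h="\<lambda>j. dco n a j * cnj (a j)"]
    by (simp add: sum_negf)
  have gamma4_eq: "gamma4 n a = h4"
    unfolding gamma4_def h4_def Cc_def B_def using sum_reindex_rev[where k=0 and n=n and h="\<lambda>j. cco n a j * cnj (bco n a j)"] by simp
  have gamma5_eq: "gamma5 n a = - h5"
    unfolding gamma5_def h5_def Cc_def A1_def using sum_reindex_rev[where k=0 and n=n and h="\<lambda>j. cco n a j * cnj (a j)"]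
    by (simp add: sum_negf)

  define dl where "dl = delta n a"
  define dl' where "dl' = delta' n a"
  define dl1 where "dl1 = delta1 n a"
  define dl2 where "dl2 = delta2 n a"
  have dl_eq: "dl = lam2 (\<Sum>c<n. (cmod (B c))\<^sup>2) (\<Sum>c<n. (cmod (A1 c))\<^sup>2) (cmod (\<Sum>c<n. B c * cnj (A1 c)))"
    unfolding dl_def delta_def lam2_sym[of "\<Sum>c<n. (cmod (B c))\<^sup>2"]
    by (simp add: lam2_def alpha_eq beta_eq gamma_eq)
  have dl'_eq: "dl' = lam2 (\<Sum>c<n-2. (cmod (B c))\<^sup>2) (\<Sum>c<n-2. (cmod (A1 c))\<^sup>2) (cmod (\<Sum>c<n-2. B c * cnj (A1 c)))"
    unfolding dl'_def delta'_def lam2_sym[of "\<Sum>c<n-2. (cmod (B c))\<^sup>2"]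
    by (simp add: lam2_def alpha'_eq beta'_eq gamma'_eq)
  have dl1_eq: "dl1 = lam2 (\<Sum>c<n. (cmod (Dd c))\<^sup>2) (\<Sum>c<n. (cmod (Cc c))\<^sup>2) (cmod (\<Sum>c<n. Dd c * cnj (Cc c)))"
    unfolding dl1_def delta1_def by (simp add: lam2_def alpha1_eq beta1_eq gamma1_eq)
  have dl2_eq: "dl2 = lam2 ((cmod h2)\<^sup>2 + (cmod h3)\<^sup>2) ((cmod h4)\<^sup>2 + (cmod h5)\<^sup>2) (cmod (h2 * cnj h4 + h3 * cnj h5))"
    unfolding dl2_def delta2_def Let_def by (simp add: lam2_def gamma2_eq gamma3_eq gamma4_eq gamma5_eq)
  have dl'_nn: "dl' \<ge> 0"
  proof -
    have "0 \<le> (\<Sum>c<n-2. (cmod (B c))\<^sup>2)" by (intro sum_nonneg) simp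
    thus ?thesis unfolding dl'_eq by (meson lam2_ge(1) order_trans)
  qed
  have dl2_nn: "dl2 \<ge> 0"
    using lam2_ge(1)[where p="(cmod h2)\<^sup>2 + (cmod h3)\<^sup>2"] unfolding dl2_eq
    by (smt (verit) zero_le_power2)
  have alpha_pos: "alpha n a > 0"
  proof -
    have "(cmod (a 1))\<^sup>2 \<le> alpha n a" unfolding alpha_def
      by (rule member_le_sum) (use n0 in auto)
    moreover have "(cmod (a 1))\<^sup>2 > 0" using assms(2) by simp
    ultimately show ?thesis by linarith
  qed
  have dl_pos: "dl > 0"
    using alpha_pos unfolding dl_eq alpha_eq by (meson lam2_ge(2) less_le_trans)

  define NV where "NV = (\<Sum>i<n. (cmod (v i))\<^sup>2)"
  have NV_pos: "NV > 0"
  proof -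
    obtain i0 where i0: "i0 < n" "v i0 \<noteq> 0" using nz by blast
    have "(cmod (v i0))\<^sup>2 \<le> NV" unfolding NV_def by (rule member_le_sum) (use i0 in auto)
    moreover have "(cmod (v i0))\<^sup>2 > 0" using i0 by simp
    ultimately show ?thesis by linarith
  qed
  have lhs_eq: "(\<Sum>jc<n. (cmod (l^k * v jc))\<^sup>2) = (cmod l)^(2*k) * NV" for k
    unfolding NV_def sum_distrib_left
    by (intro sum.cong) (auto simp: norm_mult norm_power power_mult_distrib power_mult[symmetric] mult.commute)

  define s2 where "s2 = (cmod (v 0))\<^sup>2 + (cmod (v 1))\<^sup>2"
  define T2 where "T2 = (\<Sum>c<n-2. (cmod (v (c+2)))\<^sup>2)"
  have lt2: "{..<2::nat} = {0,1}" by auto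
  have NV2: "NV = s2 + T2"
    unfolding NV_def s2_def T2_def using sum_split_k[of "\<lambda>i. (cmod (v i))\<^sup>2" n 2] n2
    by (simp add: lt2)
  define P where "P jc = v 0 * B jc + v 1 * A1 jc" for jc
  have eqA: "l^2 * v jc = P jc + (if jc < n - 2 then v (jc + 2) else 0)" if jc: "jc < n" for jc
  proof -
    have "l^2 * v jc = (\<Sum>i<n. (?C ^\<^sub>m 2) $$ (i,jc) * v i)" using ev[OF jc] by simp
    also have "\<dots> = (\<Sum>i<2. if i < n then (?C ^\<^sub>m 2) $$ (i,jc) * v i else 0)
         + (\<Sum>c<n-2. (?C ^\<^sub>m 2) $$ (c+2,jc) * v (c+2))" by (rule sum_split_k)
    also have "(\<Sum>i<2. if i < n then (?C ^\<^sub>m 2) $$ (i,jc) * v i else 0) = P jc"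
    proof -
      have "(?C ^\<^sub>m 2) $$ (1,jc) = (?C ^\<^sub>m 1) $$ (0,jc)"
        using comp_rows[of 1 n jc 2 a] n2 jc by simp
      thus ?thesis using n2 F1[OF jc] F2[OF jc] by (simp add: lt2 P_def mult.commute)
    qed
    also have "(\<Sum>c<n-2. (?C ^\<^sub>m 2) $$ (c+2,jc) * v (c+2)) = (\<Sum>c<n-2. (if c = jc then 1 else 0) * v (c+2))"
      using comp_rows[of _ n jc 2 a] jc by (intro sum.cong) auto
    also have "\<dots> = (if jc < n - 2 then v (jc + 2) else 0)" by (rule sum_delta_shift)
    finally show ?thesis .
  qed
  have sumA: "(\<Sum>jc<n. (cmod (l^2 * v jc))\<^sup>2) =
      (\<Sum>jc<n. (cmod (P jc))\<^sup>2) + T2 + 2 * Re (\<Sum>c<n-2. P c * cnj (v (c+2)))"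
  proof -
    have "(\<Sum>jc<n. (cmod (l^2 * v jc))\<^sup>2) = (\<Sum>jc<n. (cmod (P jc))\<^sup>2 +
        (if jc < n - 2 then (cmod (v (jc+2)))\<^sup>2 + 2 * Re (P jc * cnj (v (jc+2))) else 0))"
      by (intro sum.cong) (auto simp: eqA cmod_add_sq)
    also have "\<dots> = (\<Sum>jc<n. (cmod (P jc))\<^sup>2) + (\<Sum>jc<n-2. (cmod (v (jc+2)))\<^sup>2 + 2 * Re (P jc * cnj (v (jc+2))))"
      by (simp add: sum.distrib sum_restrict_less)
    also have "\<dots> = (\<Sum>jc<n. (cmod (P jc))\<^sup>2) + T2 + 2 * Re (\<Sum>c<n-2. P c * cnj (v (c+2)))"
      by (simp add: T2_def sum.distrib sum_distrib_left[symmetric] Re_sum)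
    finally show ?thesis .
  qed
  have hP: "(\<Sum>jc<n. (cmod (P jc))\<^sup>2) \<le> dl * s2"
    unfolding P_def dl_eq s2_def by (rule L2)
  have hP': "(\<Sum>jc<n-2. (cmod (P jc))\<^sup>2) \<le> dl' * s2"
    unfolding P_def dl'_eq s2_def by (rule L2)
  have cross: "Re (\<Sum>c<n-2. P c * cnj (v (c+2))) \<le> sqrt dl' * sqrt s2 * sqrt T2"
  proof -
    have "Re (\<Sum>c<n-2. P c * cnj (v (c+2))) \<le> cmod (\<Sum>c<n-2. P c * cnj (v (c+2)))"
      by (rule complex_Re_le_cmod)
    also have "\<dots> \<le> sqrt (\<Sum>c<n-2. (cmod (P c))\<^sup>2) * sqrt T2" unfolding T2_def by (rule CS)
    also have "\<dots> \<le> sqrt (dl' * s2) * sqrt T2"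
      by (intro mult_right_mono real_sqrt_le_mono hP') (simp add: T2_def sum_nonneg)
    finally show ?thesis by (simp add: real_sqrt_mult)
  qed
  define Aval where "Aval = lam2 dl 1 (sqrt dl')"
  have s2nn: "s2 \<ge> 0" unfolding s2_def by simp
  have T2nn: "T2 \<ge> 0" unfolding T2_def by (simp add: sum_nonneg)
  have "(cmod l)^4 * NV \<le> Aval * NV"
  proof -
    have "(cmod l)^4 * NV = (\<Sum>jc<n. (cmod (l^2 * v jc))\<^sup>2)" using lhs_eq[of 2] by simp
    also have "\<dots> \<le> dl * s2 + T2 + 2 * (sqrt dl' * sqrt s2 * sqrt T2)"
      unfolding sumA using hP cross by linarith
    also have "\<dots> = dl * (sqrt s2)\<^sup>2 + 1 * (sqrt T2)\<^sup>2 + 2 * sqrt dl' * sqrt s2 * sqrt T2"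
      using s2nn T2nn by simp
    also have "\<dots> \<le> Aval * ((sqrt s2)\<^sup>2 + (sqrt T2)\<^sup>2)" unfolding Aval_def by (rule L1) (simp add: dl'_nn)
    also have "\<dots> = Aval * NV" using s2nn T2nn NV2 by simp
    finally show ?thesis .
  qed
  hence boundA: "(cmod l)^4 \<le> Aval" using NV_pos by simp

  define u where "u i = (if i < n then v i else 0)" for i
  define S1 where "S1 = (cmod (u 0))\<^sup>2 + (cmod (u 1))\<^sup>2"
  define S2 where "S2 = (cmod (u 2))\<^sup>2 + (cmod (u 3))\<^sup>2"
  define T4 where "T4 = (\<Sum>c<n-4. (cmod (v (c+4)))\<^sup>2)"
  have lt4: "{..<4::nat} = {0,1,2,3}" by auto
  have NV4: "NV = S1 + S2 + T4"
  proof -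
    have "NV = (\<Sum>i<4. if i < n then (cmod (v i))\<^sup>2 else 0) + T4"
      unfolding NV_def T4_def by (rule sum_split_k)
    also have "(\<Sum>i<4. if i < n then (cmod (v i))\<^sup>2 else 0) = (\<Sum>i<4. (cmod (u i))\<^sup>2)"
      unfolding u_def by (intro sum.cong) auto
    finally show ?thesis by (simp add: lt4 S1_def S2_def)
  qed
  define P1 where "P1 jc = u 0 * Dd jc + u 1 * Cc jc" for jc
  define P2 where "P2 jc = u 2 * B jc + u 3 * A1 jc" for jc
  define Q4 where "Q4 jc = (if jc < n - 4 then v (jc + 4) else 0)" for jc
  have eqB: "l^4 * v jc = (P1 jc + P2 jc) + Q4 jc" if jc: "jc < n" for jc
  proof -
    have "l^4 * v jc = (\<Sum>i<n. (?C ^\<^sub>m 4) $$ (i,jc) * v i)" using ev[OF jc] by simp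
    also have "\<dots> = (\<Sum>i<4. if i < n then (?C ^\<^sub>m 4) $$ (i,jc) * v i else 0)
         + (\<Sum>c<n-4. (?C ^\<^sub>m 4) $$ (c+4,jc) * v (c+4))" by (rule sum_split_k)
    also have "(\<Sum>i<4. if i < n then (?C ^\<^sub>m 4) $$ (i,jc) * v i else 0) =
        (\<Sum>i<4. u i * (?C ^\<^sub>m (4 - i)) $$ (0,jc))"
      using comp_rows[of _ n jc 4 a] jc by (intro sum.cong) (auto simp: u_def)
    also have "\<dots> = P1 jc + P2 jc"
      using F1[OF jc] F2[OF jc] F3[OF jc] F4[OF jc]
      by (simp add: lt4 P1_def P2_def add_ac)
    also have "(\<Sum>c<n-4. (?C ^\<^sub>m 4) $$ (c+4,jc) * v (c+4)) = (\<Sum>c<n-4. (if c = jc then 1 else 0) * v (c+4))"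
      using comp_rows[of _ n jc 4 a] jc by (intro sum.cong) auto
    also have "\<dots> = Q4 jc" unfolding Q4_def by (rule sum_delta_shift)
    finally show ?thesis .
  qed
  have sumQ: "(\<Sum>jc<n. (cmod (Q4 jc))\<^sup>2) = T4"
  proof -
    have "(\<Sum>jc<n. (cmod (Q4 jc))\<^sup>2) = (\<Sum>jc<n. if jc < n - 4 then (cmod (v (jc+4)))\<^sup>2 else 0)"
      unfolding Q4_def by (intro sum.cong) auto
    thus ?thesis unfolding T4_def by (simp add: sum_restrict_less)
  qed
  have hP1: "(\<Sum>jc<n. (cmod (P1 jc))\<^sup>2) \<le> dl1 * S1"
    unfolding P1_def dl1_eq S1_def by (rule L2)
  have hP2: "(\<Sum>jc<n. (cmod (P2 jc))\<^sup>2) \<le> dl * S2"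
    unfolding P2_def dl_eq S2_def by (rule L2)
  define X0 where "X0 = u 0 * h2 + u 1 * h4"
  define X1 where "X1 = u 0 * h3 + u 1 * h5"
  have crossB_eq: "(\<Sum>jc<n. P1 jc * cnj (P2 jc)) = cnj (u 2) * X0 + cnj (u 3) * X1"
    unfolding P1_def P2_def X0_def X1_def h2_def h3_def h4_def h5_def by (rule cross_expand)
  have X01: "(cmod X0)\<^sup>2 + (cmod X1)\<^sup>2 \<le> dl2 * S1"
  proof -
    have "(cmod X0)\<^sup>2 + (cmod X1)\<^sup>2 = (cmod (u 0))\<^sup>2 * ((cmod h2)\<^sup>2 + (cmod h3)\<^sup>2)
       + (cmod (u 1))\<^sup>2 * ((cmod h4)\<^sup>2 + (cmod h5)\<^sup>2)
       + 2 * Re (u 0 * cnj (u 1) * (h2 * cnj h4 + h3 * cnj h5))"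
      unfolding X0_def X1_def cmod_lin_sq by (simp add: algebra_simps)
    also have "\<dots> \<le> dl2 * S1" unfolding dl2_eq S1_def by (rule L1c)
    finally show ?thesis .
  qed
  have crossB: "Re (\<Sum>jc<n. P1 jc * cnj (P2 jc)) \<le> sqrt dl2 * sqrt S1 * sqrt S2"
  proof -
    have "Re (\<Sum>jc<n. P1 jc * cnj (P2 jc)) \<le> cmod (cnj (u 2) * X0 + cnj (u 3) * X1)"
      unfolding crossB_eq by (rule complex_Re_le_cmod)
    also have "\<dots> \<le> cmod (u 2) * cmod X0 + cmod (u 3) * cmod X1"
      by (metis complex_mod_cnj norm_mult norm_triangle_ineq)
    also have "\<dots> \<le> sqrt ((cmod (u 2))\<^sup>2 + (cmod (u 3))\<^sup>2) * sqrt ((cmod X0)\<^sup>2 + (cmod X1)\<^sup>2)"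
      by (rule CS2)
    also have "\<dots> \<le> sqrt S2 * sqrt (dl2 * S1)"
      unfolding S2_def by (intro mult_left_mono real_sqrt_le_mono X01) simp
    finally show ?thesis by (simp add: real_sqrt_mult mult_ac)
  qed
  define Yval where "Yval = lam2 dl1 dl (sqrt dl2)"
  have S1nn: "S1 \<ge> 0" unfolding S1_def by simp
  have S2nn: "S2 \<ge> 0" unfolding S2_def by simp
  have T4nn: "T4 \<ge> 0" unfolding T4_def by (simp add: sum_nonneg)
  have Ypos: "Yval > 0" using lam2_ge(2)[where p=dl1 and r=dl and q="sqrt dl2"] dl_pos
    unfolding Yval_def by linarith
  have hPP: "(\<Sum>jc<n. (cmod (P1 jc + P2 jc))\<^sup>2) \<le> Yval * (S1 + S2)"
  proof -
    have "(\<Sum>jc<n. (cmod (P1 jc + P2 jc))\<^sup>2) = (\<Sum>jc<n. (cmod (1 * P1 jc + 1 * P2 jc))\<^sup>2)" by simp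
    also have "\<dots> = (\<Sum>jc<n. (cmod (P1 jc))\<^sup>2) + (\<Sum>jc<n. (cmod (P2 jc))\<^sup>2)
        + 2 * Re (\<Sum>jc<n. P1 jc * cnj (P2 jc))" unfolding expand_sum by simp
    also have "\<dots> \<le> dl1 * S1 + dl * S2 + 2 * (sqrt dl2 * sqrt S1 * sqrt S2)"
      using hP1 hP2 crossB by linarith
    also have "\<dots> = dl1 * (sqrt S1)\<^sup>2 + dl * (sqrt S2)\<^sup>2 + 2 * sqrt dl2 * sqrt S1 * sqrt S2"
      using S1nn S2nn by simp
    also have "\<dots> \<le> Yval * ((sqrt S1)\<^sup>2 + (sqrt S2)\<^sup>2)" unfolding Yval_def by (rule L1) (simp add: dl2_nn)
    also have "\<dots> = Yval * (S1 + S2)" using S1nn S2nn by simp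
    finally show ?thesis .
  qed
  have "(cmod l)^8 * NV \<le> (Yval + 1) * NV"
  proof -
    have "(cmod l)^8 * NV = (\<Sum>jc<n. (cmod (l^4 * v jc))\<^sup>2)" using lhs_eq[of 4] by simp
    also have "\<dots> = (\<Sum>jc<n. (cmod ((P1 jc + P2 jc) + Q4 jc))\<^sup>2)"
      by (intro sum.cong) (auto simp: eqB)
    also have "\<dots> \<le> (\<Sum>jc<n. (Yval + 1) * ((cmod (P1 jc + P2 jc))\<^sup>2 / Yval + (cmod (Q4 jc))\<^sup>2))"
      by (intro sum_mono cmod_sq_split Ypos)
    also have "\<dots> = (Yval + 1) * (\<Sum>jc<n. (cmod (P1 jc + P2 jc))\<^sup>2 / Yval + (cmod (Q4 jc))\<^sup>2)"
      by (rule sum_distrib_left[symmetric])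
    also have "\<dots> = (Yval + 1) * ((\<Sum>jc<n. (cmod (P1 jc + P2 jc))\<^sup>2) / Yval + T4)"
      by (simp add: sum.distrib sum_divide_distrib sumQ)
    also have "\<dots> \<le> (Yval + 1) * ((Yval * (S1 + S2)) / Yval + T4)"
      using hPP Ypos by (intro mult_left_mono add_right_mono divide_right_mono) auto
    also have "\<dots> = (Yval + 1) * NV" using Ypos NV4 by simp
    finally show ?thesis .
  qed
  hence "(cmod l)^8 \<le> Yval + 1" using NV_pos by simp
  hence boundB: "(cmod l)^4 \<le> sqrt (Yval + 1)"
    by (intro real_le_rsqrt) (simp add: power_mult[symmetric])

  define T where "T = (1/4) * Aval + (3/4) * sqrt (Yval + 1)"
  have RT: "(cmod l)^4 \<le> T" unfolding T_def using boundA boundB by linarith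
  have Aval_eq: "Aval = (delta n a + 1 + sqrt ((delta n a - 1)\<^sup>2 + 4 * delta' n a)) / 2"
    unfolding Aval_def lam2_def dl_def[symmetric] dl'_def[symmetric] using dl'_nn by simp
  have Yval_eq: "Yval = (delta1 n a + delta n a
                      + sqrt ((delta1 n a - delta n a)\<^sup>2 + 4 * delta2 n a)) / 2"
    unfolding Yval_def lam2_def dl_def[symmetric] dl1_def[symmetric] dl2_def[symmetric] using dl2_nn by simp
  have "cmod l \<le> T powr (1/4)"
  proof (cases "cmod l = 0")
    case True
    then show ?thesis by simp
  next
    case False
    hence lp: "cmod l > 0" by simp
    have "(cmod l)^4 = cmod l powr (real 4)" using lp by (rule powr_realpow[symmetric])
    hence h1: "((cmod l)^4) powr (1/4) = cmod l powr (real 4 * (1/4))" by (simp only: powr_powr)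
    have e: "cmod l powr (real 4 * (1/4)) = cmod l" by simp
    have "cmod l = ((cmod l)^4) powr (1/4)" using h1 e by linarith
    also have "\<dots> \<le> T powr (1/4)" by (rule powr_mono2) (use RT in auto)
    finally show ?thesis .
  qed
  thus ?thesis unfolding r[symmetric] T_def Aval_eq Yval_eq .
qed

end
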